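(* Let $I=[-\tfrac12,\tfrac12]$ and $\Sigma=I\times I$ with the sup distance. Let $F:\Sigma\to\Sigma$ be a Borel map of the form $F(x,y)=(T(x),G(x,y))$, let $\mu$ be an $F$-invariant Borel probability measure on $\Sigma$, and let $\mu_x=(\pi_x)_*\mu$ be its marginal on the $x$-axis (which is $T$-invariant), where $\pi_x(x,y)=x$. Suppose: (1) there are constants $C>0,\lambda>0$ such that for every $g\in L^1(I)$, every $f:I\to\mathbb{R}$ of bounded variation and every $n\ge 0$, $$\Big|\int g(T^n(x))f(x)\,dm-\int g\,d\mu_x\int f\,dm\Big|\le C\,\|g\|_{L^1}\,\|f\|_{BV}\,e^{-\lambda n},$$ where $m$ is Lebesgue measure on $I$; moreover $T^{-1}(x)$ is finite for every $x\in I$; (2) there is $\lambda_0<1$ such that $|G(x,y_1)-G(x,y_2)|\le\lambda_0|y_1-y_2|$ for all $x,y_1,y_2$; (3) there is a constant $K$ such that for every $\ell$-Lipschitz function $f:\Sigma\to\mathbb{R}$ the measure $(\pi_x)_*(f\mu)$ has a density $\overline f$ of bounded variation with $\operatorname{var}(\overline f)\le K\ell$. Then $(F,\mu)$ has exponential decay of correlations with respect to Lipschitz observables: there are constants $C'>0$, $\rho>0$ such that for all Lipschitz $g:\Sigma\to\mathbb{R}$, all Lipschitz $f:\Sigma\to\mathbb{R}$ with $f\ge 0$, and all $n\ge0$, $$\Big|\int g\circ F^n\, f\,d\mu-\int f\,d\mu\int g\,d\mu\Big|\le C'\,L(g)\,\|f\|_{lip}\,e^{-\rho n}.$$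
   Context: $L(g)=\sup_{p\ne q}|g(p)-g(q)|/d(p,q)$ is the best Lipschitz constant, $\|f\|_{lip}=\|f\|_\infty+L(f)$. $f\mu$ denotes the measure with density $f$ with respect to $\mu$. $\|f\|_{BV}$ is the bounded-variation norm ($\sup|f|$ plus total variation). The paper states the conclusion as "exponential decay of correlations with respect to Lipschitz and $L^1$ observables"; the displayed inequality is the precise form of this decay. *)

theory Defs
  imports "HOL-Analysis.Analysis" "HOL-Probability.Probability"
begin

definition Iv :: "real set" where
  "Iv = {-1/2 .. 1/2}"

definition Sq :: "(real \<times> real) set" where
  "Sq = Iv \<times> Iv"

definition dsup :: "real \<times> real \<Rightarrow> real \<times> real \<Rightarrow> real" where
  "dsup p q = max \<bar>fst p - fst q\<bar> \<bar>snd p - snd q\<bar>"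

definition is_lip_with :: "real \<Rightarrow> (real \<times> real \<Rightarrow> real) \<Rightarrow> bool" where
  "is_lip_with l f \<longleftrightarrow> (\<forall>p\<in>Sq. \<forall>q\<in>Sq. \<bar>f p - f q\<bar> \<le> l * dsup p q)"

definition is_lip :: "(real \<times> real \<Rightarrow> real) \<Rightarrow> bool" where
  "is_lip f \<longleftrightarrow> (\<exists>l. is_lip_with l f)"

definition lipconst :: "(real \<times> real \<Rightarrow> real) \<Rightarrow> real" where
  "lipconst g = (SUP pq \<in> {(p, q). p \<in> Sq \<and> q \<in> Sq \<and> p \<noteq> q}.
                   \<bar>g (fst pq) - g (snd pq)\<bar> / dsup (fst pq) (snd pq))"

definition lipnorm :: "(real \<times> real \<Rightarrow> real) \<Rightarrow> real" where
  "lipnorm f = (SUP p \<in> Sq. \<bar>f p\<bar>) + lipconst f"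

definition var_sums :: "(real \<Rightarrow> real) \<Rightarrow> real set" where
  "var_sums f = {(\<Sum>i<length xs - 1. \<bar>f (xs ! Suc i) - f (xs ! i)\<bar>) | xs.
                   sorted xs \<and> set xs \<subseteq> Iv}"

definition is_BV :: "(real \<Rightarrow> real) \<Rightarrow> bool" where
  "is_BV f \<longleftrightarrow> bdd_above (var_sums f)"

definition totvar :: "(real \<Rightarrow> real) \<Rightarrow> real" where
  "totvar f = Sup (var_sums f)"

definition BVnorm :: "(real \<Rightarrow> real) \<Rightarrow> real" where
  "BVnorm f = (SUP x \<in> Iv. \<bar>f x\<bar>) + totvar f"

definition mI :: "real measure" where
  "mI = restrict_space lborel Iv"

end

theory Submission
  imports Defs
begin


lemma space_SB: "space (restrict_space borel Sq) = Sq"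
  by (simp add: space_restrict_space)

lemma space_IB: "space (restrict_space borel Iv) = Iv"
  by (simp add: space_restrict_space)

lemma Iv_0: "(0::real) \<in> Iv" by (simp add: Iv_def)

lemma Sq_mem: "(x,y) \<in> Sq \<longleftrightarrow> x \<in> Iv \<and> y \<in> Iv" by (simp add: Sq_def)

lemma dsup_nonneg: "0 \<le> dsup p q" by (simp add: dsup_def)

lemma dsup_le1: "p \<in> Sq \<Longrightarrow> q \<in> Sq \<Longrightarrow> dsup p q \<le> 1"
  by (cases p; cases q) (auto simp: dsup_def Sq_def Iv_def)

lemma dsup_pos: "p \<noteq> q \<Longrightarrow> 0 < dsup p q"
  by (cases p; cases q) (auto simp: dsup_def)

lemma dsup_le_dist: "dsup p q \<le> dist p q"
proof (cases p; cases q)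
  fix a b c d assume [simp]: "p = (a,b)" "q = (c,d)"
  have "\<bar>a - c\<bar> \<le> sqrt ((dist a c)\<^sup>2 + (dist b d)\<^sup>2)"
    by (metis dist_real_def real_sqrt_abs real_sqrt_le_mono le_add_same_cancel1 zero_le_power2 power2_abs)
  moreover have "\<bar>b - d\<bar> \<le> sqrt ((dist a c)\<^sup>2 + (dist b d)\<^sup>2)"
    by (metis dist_real_def real_sqrt_abs real_sqrt_le_mono le_add_same_cancel2 zero_le_power2 power2_abs)
  ultimately show ?thesis by (simp add: dsup_def dist_Pair_Pair)
qed

lemma lip_continuous: "is_lip_with l f \<Longrightarrow> continuous_on Sq f"
proof -
  assume h: "is_lip_with l f"
  have "(max l 0)-lipschitz_on Sq f"
  proof (rule lipschitz_onI)
    fix x y assume "x \<in> Sq" "y \<in> Sq"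
    hence "\<bar>f x - f y\<bar> \<le> l * dsup x y" using h by (auto simp: is_lip_with_def)
    also have "\<dots> \<le> max l 0 * dsup x y" by (simp add: dsup_nonneg mult_right_mono)
    also have "\<dots> \<le> max l 0 * dist x y" by (simp add: dsup_le_dist mult_left_mono)
    finally show "dist (f x) (f y) \<le> max l 0 * dist x y" by (simp add: dist_real_def)
  qed simp
  thus ?thesis by (rule lipschitz_on_continuous_on)
qed

lemma lip_meas: "is_lip_with l f \<Longrightarrow> f \<in> borel_measurable (restrict_space borel Sq)"
  by (rule borel_measurable_continuous_on_restrict) (rule lip_continuous)

lemma lipconst_props:
  assumes "is_lip g"
  shows "0 \<le> lipconst g" "is_lip_with (lipconst g) g"
proof -
  obtain l where l: "is_lip_with l g" using assms by (auto simp: is_lip_def)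
  let ?P = "{(p, q). p \<in> Sq \<and> q \<in> Sq \<and> p \<noteq> q}"
  let ?r = "\<lambda>pq. \<bar>g (fst pq) - g (snd pq)\<bar> / dsup (fst pq) (snd pq)"
  have bdd: "bdd_above (?r ` ?P)"
  proof (rule bdd_aboveI2)
    fix pq assume "pq \<in> ?P"
    then obtain p q where pq: "pq = (p,q)" "p \<in> Sq" "q \<in> Sq" "p \<noteq> q" by auto
    hence "\<bar>g p - g q\<bar> \<le> l * dsup p q" using l by (auto simp: is_lip_with_def)
    thus "?r pq \<le> l" using dsup_pos[OF pq(4)] pq by (simp add: divide_le_eq)
  qed
  have mem: "((0,0),(1/2,0)) \<in> ?P" by (auto simp: Sq_def Iv_def)
  have "0 \<le> ?r ((0,0),(1/2,0))" by (simp add: dsup_nonneg)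
  also have "\<dots> \<le> lipconst g" unfolding lipconst_def by (rule cSUP_upper[OF mem bdd])
  finally show "0 \<le> lipconst g" .
  show "is_lip_with (lipconst g) g" unfolding is_lip_with_def
  proof (intro ballI)
    fix p q assume pq: "p \<in> Sq" "q \<in> Sq"
    show "\<bar>g p - g q\<bar> \<le> lipconst g * dsup p q"
    proof (cases "p = q")
      case False
      hence m: "(p,q) \<in> ?P" using pq by auto
      have "?r (p,q) \<le> lipconst g" unfolding lipconst_def by (rule cSUP_upper[OF m bdd])
      thus ?thesis using dsup_pos[OF False] by (simp add: divide_le_eq)
    qed (simp add: dsup_def)
  qed
qed

lemma lip_bounded:
  assumes "is_lip_with l f"
  shows "bdd_above ((\<lambda>p. \<bar>f p\<bar>) ` Sq)" "\<And>p. p \<in> Sq \<Longrightarrow> \<bar>f p\<bar> \<le> (SUP p\<in>Sq. \<bar>f p\<bar>)"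
    "0 \<le> (SUP p\<in>Sq. \<bar>f p\<bar>)"
proof -
  have z: "(0,0) \<in> Sq" by (simp add: Sq_def Iv_def)
  show b: "bdd_above ((\<lambda>p. \<bar>f p\<bar>) ` Sq)"
  proof (rule bdd_aboveI2)
    fix p assume p: "p \<in> Sq"
    have "\<bar>f p - f (0,0)\<bar> \<le> l * dsup p (0,0)" using assms p z by (auto simp: is_lip_with_def)
    also have "\<dots> \<le> \<bar>l\<bar> * 1" using dsup_le1[OF p z] dsup_nonneg
      by (metis abs_ge_self abs_mult abs_of_nonneg mult_mono abs_ge_zero order.trans)
    finally show "\<bar>f p\<bar> \<le> \<bar>f (0,0)\<bar> + \<bar>l\<bar>" by linarith
  qed
  show "\<And>p. p \<in> Sq \<Longrightarrow> \<bar>f p\<bar> \<le> (SUP p\<in>Sq. \<bar>f p\<bar>)" by (rule cSUP_upper[OF _ b])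
  from this[OF z] show "0 \<le> (SUP p\<in>Sq. \<bar>f p\<bar>)" by linarith
qed



locale sys =
  fixes F :: "real \<times> real \<Rightarrow> real \<times> real" and T :: "real \<Rightarrow> real"
    and G :: "real \<Rightarrow> real \<Rightarrow> real" and \<mu> :: "(real \<times> real) measure"
  assumes mu_sets: "sets \<mu> = sets (restrict_space borel Sq)"
    and mu_prob: "prob_space \<mu>"
    and F_meas: "F \<in> measurable \<mu> \<mu>"
    and F_inv: "distr \<mu> \<mu> F = \<mu>"
    and F_form: "\<forall>x\<in>Iv. \<forall>y\<in>Iv. F (x, y) = (T x, G x y)"
begin

lemma space_mu: "space \<mu> = Sq"
  using sets_eq_imp_space_eq[OF mu_sets] by (simp add: space_SB)

lemma meas_mu_src: "measurable \<mu> N = measurable (restrict_space borel Sq) N"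
  by (rule measurable_cong_sets[OF mu_sets refl])

lemma meas_mu_tgt: "measurable M \<mu> = measurable M (restrict_space borel Sq)"
  by (rule measurable_cong_sets[OF refl mu_sets])

lemma F_Sq: "p \<in> Sq \<Longrightarrow> F p \<in> Sq"
  using measurable_space[OF F_meas] space_mu by auto

lemma Fk_Sq: "p \<in> Sq \<Longrightarrow> (F^^k) p \<in> Sq"
  by (induction k) (auto intro: F_Sq)

lemma Fk_fst: "p \<in> Sq \<Longrightarrow> fst ((F^^k) p) = (T^^k) (fst p)"
proof (induction k)
  case (Suc k)
  obtain a b where ab: "(F^^k) p = (a,b)" by fastforce
  have "(a,b) \<in> Sq" using Fk_Sq[OF Suc.prems, of k] ab by simp
  hence "F (a,b) = (T a, G a b)" using F_form by (simp add: Sq_def)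
  thus ?case using Suc ab by simp
qed simp

lemma T_Iv: "x \<in> Iv \<Longrightarrow> (T^^k) x \<in> Iv"
  using Fk_fst[of "(x,0)" k] Fk_Sq[of "(x,0)" k] Iv_0
  by (auto simp: Sq_def mem_Times_iff)

lemma Fk_contr:
  assumes c: "0 \<le> c" "\<forall>x\<in>Iv. \<forall>y1\<in>Iv. \<forall>y2\<in>Iv. \<bar>G x y1 - G x y2\<bar> \<le> c * \<bar>y1 - y2\<bar>"
  shows "p \<in> Sq \<Longrightarrow> q \<in> Sq \<Longrightarrow> fst p = fst q \<Longrightarrow>
     \<bar>snd ((F^^k) p) - snd ((F^^k) q)\<bar> \<le> c^k * \<bar>snd p - snd q\<bar>"
proof (induction k)
  case (Suc k)
  obtain a b where ab: "(F^^k) p = (a,b)" by fastforce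
  obtain a' b' where ab': "(F^^k) q = (a',b')" by fastforce
  have s: "(a,b) \<in> Sq" "(a',b') \<in> Sq" using Fk_Sq[OF Suc.prems(1), of k] Fk_Sq[OF Suc.prems(2), of k] ab ab' by auto
  have "a = a'" using Fk_fst[OF Suc.prems(1), of k] Fk_fst[OF Suc.prems(2), of k] Suc.prems(3) ab ab' by simp
  hence e: "F (a,b) = (T a, G a b)" "F (a',b') = (T a, G a b')" using F_form s by (auto simp: Sq_def)
  have "\<bar>G a b - G a b'\<bar> \<le> c * \<bar>b - b'\<bar>" using c s \<open>a = a'\<close> by (auto simp: Sq_def)
  also have "\<dots> \<le> c * (c^k * \<bar>snd p - snd q\<bar>)" using Suc.IH[OF Suc.prems] ab ab' c by (simp add: mult_left_mono)
  finally show ?case using ab ab' e by (simp add: mult.assoc)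
qed simp

lemma Fk_meas: "F^^k \<in> measurable \<mu> \<mu>"
proof (induction k)
  case (Suc k)
  show ?case using measurable_comp[OF Suc.IH F_meas] by (simp add: comp_def)
qed simp

lemma Fk_inv: "distr \<mu> \<mu> (F^^k) = \<mu>"
proof (induction k)
  case 0
  show ?case by (simp add: distr_id2[of \<mu>]) 
next
  case (Suc k)
  have "distr \<mu> \<mu> (F^^Suc k) = distr (distr \<mu> \<mu> (F^^k)) \<mu> F"
    by (simp add: distr_distr[OF F_meas Fk_meas])
  thus ?case using Suc F_inv by (simp add: comp_def)
qed

lemma fst_meas: "fst \<in> measurable \<mu> (restrict_space borel Iv)"
  unfolding meas_mu_src
proof (rule measurable_restrict_space2)
  show "fst \<in> space (restrict_space borel Sq) \<rightarrow> Iv"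
  proof
    fix p assume "p \<in> space (restrict_space borel Sq)"
    hence "p \<in> Sq" by (simp only: space_SB)
    thus "fst p \<in> Iv" by (auto simp: Sq_def)
  qed
  show "fst \<in> borel_measurable (restrict_space borel Sq)"
    by (rule measurable_restrict_space1) (rule borel_measurable_continuous_onI[OF continuous_on_fst[OF continuous_on_id]])
qed

lemma pair0_meas: "(\<lambda>x. (x, 0::real)) \<in> measurable (restrict_space borel Iv) \<mu>"
  unfolding meas_mu_tgt
proof (rule measurable_restrict_space2)
  show "(\<lambda>x. (x, 0::real)) \<in> space (restrict_space borel Iv) \<rightarrow> Sq" by (auto simp: space_IB Sq_def Iv_def)
  show "(\<lambda>x. (x, 0::real)) \<in> measurable (restrict_space borel Iv) borel"
    by (rule measurable_restrict_space1) (rule borel_measurable_continuous_onI, intro continuous_intros)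
qed

end


lemma sets_mI: "sets mI = sets (restrict_space borel Iv)"
  by (simp add: mI_def sets_restrict_space)

lemma space_mI: "space mI = Iv"
  by (simp add: mI_def space_restrict_space)

lemma meas_mI: "measurable mI N = measurable (restrict_space borel Iv) N"
  by (rule measurable_cong_sets[OF sets_mI refl])

lemma prob_mI: "prob_space mI"
  unfolding mI_def
  by (rule prob_space_restrict_space) (auto simp: Iv_def)

lemma totvar_props:
  assumes "is_BV fb"
  shows "0 \<le> totvar fb" "\<And>x y. x \<in> Iv \<Longrightarrow> y \<in> Iv \<Longrightarrow> \<bar>fb x - fb y\<bar> \<le> totvar fb"
proof -
  have z: "0 \<in> var_sums fb" unfolding var_sums_def
    by (rule CollectI, rule exI[of _ "[]"]) simp
  show "0 \<le> totvar fb" unfolding totvar_def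
    using cSup_upper[OF z] assms by (simp add: is_BV_def)
  fix x y assume xy: "x \<in> Iv" "y \<in> Iv"
  have m: "\<bar>fb (max x y) - fb (min x y)\<bar> \<in> var_sums fb" unfolding var_sums_def
    by (rule CollectI, rule exI[of _ "[min x y, max x y]"]) (use xy in \<open>auto simp: min_def max_def\<close>)
  have "\<bar>fb x - fb y\<bar> = \<bar>fb (max x y) - fb (min x y)\<bar>" by (auto simp: min_def max_def)
  also have "\<dots> \<le> totvar fb" unfolding totvar_def
    using cSup_upper[OF m] assms by (simp add: is_BV_def)
  finally show "\<bar>fb x - fb y\<bar> \<le> totvar fb" .
qed

lemma fb_sup:
  assumes bv: "is_BV fb" and int: "integrable mI fb" and x0: "x0 \<in> Iv"
  shows "\<bar>fb x0\<bar> \<le> \<bar>\<integral>x. fb x \<partial>mI\<bar> + totvar fb"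
proof -
  interpret mI: prob_space mI by (rule prob_mI)
  have "(\<integral>x. fb x \<partial>mI) \<le> (\<integral>x. fb x0 + totvar fb \<partial>mI)"
  proof (rule integral_mono)
    fix x assume "x \<in> space mI"
    thus "fb x \<le> fb x0 + totvar fb" using totvar_props(2)[OF bv _ x0, of x] by (simp add: space_mI)
  qed (use int in auto)
  moreover have "(\<integral>x. fb x0 - totvar fb \<partial>mI) \<le> (\<integral>x. fb x \<partial>mI)"
  proof (rule integral_mono)
    fix x assume "x \<in> space mI"
    thus "fb x0 - totvar fb \<le> fb x" using totvar_props(2)[OF bv _ x0, of x] by (simp add: space_mI)
  qed (use int in auto)
  ultimately show ?thesis by (auto simp: mI.prob_space abs_le_iff abs_if)
qed

lemma BVnorm_bound:
  assumes bv: "is_BV fb" and int: "integrable mI fb"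
  shows "BVnorm fb \<le> \<bar>\<integral>x. fb x \<partial>mI\<bar> + 2 * totvar fb"
proof -
  have "(SUP x\<in>Iv. \<bar>fb x\<bar>) \<le> \<bar>\<integral>x. fb x \<partial>mI\<bar> + totvar fb"
    by (rule cSUP_least) (use Iv_0 fb_sup[OF bv int] in auto)
  thus ?thesis by (simp add: BVnorm_def)
qed

context sys begin

lemma push:
  fixes f :: "real \<times> real \<Rightarrow> real" and S :: real and fb H :: "real \<Rightarrow> real"
  assumes fm: "f \<in> borel_measurable \<mu>" and fnn: "\<forall>p\<in>Sq. 0 \<le> f p" and fS: "\<forall>p\<in>Sq. \<bar>f p\<bar> \<le> S"
    and fb: "integrable mI fb"
    and eq: "\<forall>A \<in> sets (restrict_space borel Iv).
                    (\<integral>p. indicator (fst -` A) p * f p \<partial>\<mu>) = (\<integral>x. indicator A x * fb x \<partial>mI)"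
    and Hm: "H \<in> borel_measurable (restrict_space borel Iv)"
  shows "(\<integral>p. H (fst p) * f p \<partial>\<mu>) = (\<integral>x. H x * fb x \<partial>mI)"
proof -
  interpret prob_space \<mu> by (rule mu_prob)
  interpret mI: prob_space mI by (rule prob_mI)
  have fbm[measurable]: "fb \<in> borel_measurable mI" using fb by auto
  have fbm': "fb \<in> borel_measurable (restrict_space borel Iv)" using fbm unfolding meas_mI .
  have fint: "integrable \<mu> f"
    by (rule integrable_const_bound[where B=S]) (use fS fm space_mu in auto)
  define A where "A = {x \<in> space mI. fb x < 0}"
  have A: "A \<in> sets mI" unfolding A_def by measurable
  have AI: "A \<in> sets (restrict_space borel Iv)" using A sets_mI by simp
  have ia: "integrable mI (\<lambda>x. indicator A x * fb x)"
    using integrable_real_mult_indicator[OF A fb] by (simp add: mult.commute)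
  have "0 \<le> (\<integral>p. indicator (fst -` A) p * f p \<partial>\<mu>)"
    using fnn space_mu by (intro integral_nonneg_AE AE_I2) auto
  hence ge: "0 \<le> (\<integral>x. indicator A x * fb x \<partial>mI)" using eq AI by simp
  have le: "0 \<le> (\<integral>x. - (indicator A x * fb x) \<partial>mI)"
    by (intro integral_nonneg_AE AE_I2) (auto simp: A_def indicator_def)
  have "(\<integral>x. - (indicator A x * fb x) \<partial>mI) = 0" using ge le by simp
  hence "AE x in mI. - (indicator A x * fb x) = 0"
    using ia by (subst (asm) integral_nonneg_eq_0_iff_AE) (auto simp: A_def indicator_def)
  from this AE_space[of mI] have fbnn: "AE x in mI. 0 \<le> fb x"
    by eventually_elim (auto simp: A_def indicator_def split: if_splits)
  define \<nu>1 where "\<nu>1 = distr (density \<mu> (\<lambda>p. ennreal (f p))) (restrict_space borel Iv) fst"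
  define \<nu>2 where "\<nu>2 = density mI (\<lambda>x. ennreal (fb x))"
  have fstd: "fst \<in> measurable (density \<mu> (\<lambda>p. ennreal (f p))) (restrict_space borel Iv)"
    using fst_meas by (simp add: measurable_cong_sets[OF sets_density refl])
  have "\<nu>1 = \<nu>2"
  proof (rule measure_eqI)
    show "sets \<nu>1 = sets \<nu>2" by (simp add: \<nu>1_def \<nu>2_def sets_mI)
    fix B assume "B \<in> sets \<nu>1"
    hence B: "B \<in> sets (restrict_space borel Iv)" by (simp add: \<nu>1_def)
    have Bs: "fst -` B \<inter> space \<mu> \<in> sets \<mu>" by (rule measurable_sets[OF fst_meas B])
    have "emeasure \<nu>1 B = emeasure (density \<mu> (\<lambda>p. ennreal (f p))) (fst -` B \<inter> space \<mu>)"
      unfolding \<nu>1_def by (simp add: emeasure_distr[OF fstd B])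
    also have "\<dots> = (\<integral>\<^sup>+ p. ennreal (f p) * indicator (fst -` B \<inter> space \<mu>) p \<partial>\<mu>)"
      by (rule emeasure_density) (use fm Bs in auto)
    also have "\<dots> = (\<integral>\<^sup>+ p. ennreal (indicator (fst -` B) p * f p) \<partial>\<mu>)"
      by (rule nn_integral_cong) (auto simp: indicator_def)
    also have "\<dots> = ennreal (\<integral>p. indicator (fst -` B) p * f p \<partial>\<mu>)"
    proof (rule nn_integral_eq_integral)
      show "integrable \<mu> (\<lambda>p. indicator (fst -` B) p * f p)"
      proof -
        have "integrable \<mu> (\<lambda>p. indicator (fst -` B) p * f p) \<longleftrightarrow> integrable \<mu> (\<lambda>x. f x * indicator (fst -` B \<inter> space \<mu>) x)"
          by (rule Bochner_Integration.integrable_cong) (auto simp: indicator_def)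
        thus ?thesis using integrable_real_mult_indicator[OF Bs fint] by blast
      qed
      show "AE p in \<mu>. 0 \<le> indicator (fst -` B) p * f p" using fnn space_mu by auto
    qed
    also have "\<dots> = ennreal (\<integral>x. indicator B x * fb x \<partial>mI)" using eq B by simp
    also have "\<dots> = (\<integral>\<^sup>+ x. ennreal (indicator B x * fb x) \<partial>mI)"
    proof (rule nn_integral_eq_integral[symmetric])
      have Bm: "B \<in> sets mI" using B sets_mI by simp
      show "integrable mI (\<lambda>x. indicator B x * fb x)"
        using integrable_real_mult_indicator[OF Bm fb] by (simp add: mult.commute)
      show "AE x in mI. 0 \<le> indicator B x * fb x" using fbnn by eventually_elim auto
    qed
    also have "\<dots> = (\<integral>\<^sup>+ x. ennreal (fb x) * indicator B x \<partial>mI)"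
      by (rule nn_integral_cong) (auto simp: indicator_def)
    also have "\<dots> = emeasure \<nu>2 B"
      unfolding \<nu>2_def by (rule emeasure_density[symmetric]) (use fbm B sets_mI in auto)
    finally show "emeasure \<nu>1 B = emeasure \<nu>2 B" .
  qed
  hence "integral\<^sup>L \<nu>1 H = integral\<^sup>L \<nu>2 H" by simp
  moreover have "integral\<^sup>L \<nu>1 H = (\<integral>p. f p *\<^sub>R H (fst p) \<partial>\<mu>)"
    unfolding \<nu>1_def
  proof -
    have "integral\<^sup>L (distr (density \<mu> (\<lambda>p. ennreal (f p))) (restrict_space borel Iv) fst) H
       = (\<integral>p. H (fst p) \<partial>density \<mu> (\<lambda>p. ennreal (f p)))" by (rule integral_distr[OF fstd Hm])
    also have "\<dots> = (\<integral>p. f p *\<^sub>R H (fst p) \<partial>\<mu>)"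
      by (rule integral_density) (use measurable_comp[OF fst_meas Hm, unfolded comp_def] fm fnn space_mu in auto)
    finally show "integral\<^sup>L (distr (density \<mu> (\<lambda>p. ennreal (f p))) (restrict_space borel Iv) fst) H = (\<integral>p. f p *\<^sub>R H (fst p) \<partial>\<mu>)" .
  qed
  moreover have "integral\<^sup>L \<nu>2 H = (\<integral>x. fb x *\<^sub>R H x \<partial>mI)"
    unfolding \<nu>2_def by (rule integral_density) (use Hm meas_mI fbm fbnn in auto)
  ultimately show ?thesis by (simp add: mult.commute)
qed

end


lemma int_diff_bound:
  fixes a b :: "'a \<Rightarrow> real"
  assumes P: "prob_space M" and ia: "integrable M a" and ib: "integrable M b"
    and bd: "\<And>x. x \<in> space M \<Longrightarrow> \<bar>a x - b x\<bar> \<le> e"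
  shows "\<bar>(\<integral>x. a x \<partial>M) - (\<integral>x. b x \<partial>M)\<bar> \<le> e"
proof -
  interpret prob_space M by (rule P)
  have "\<bar>(\<integral>x. a x \<partial>M) - (\<integral>x. b x \<partial>M)\<bar> = \<bar>\<integral>x. a x - b x \<partial>M\<bar>"
    using ia ib by simp
  also have "\<dots> \<le> (\<integral>x. \<bar>a x - b x\<bar> \<partial>M)" by (rule integral_abs_bound)
  also have "\<dots> \<le> (\<integral>x. e \<partial>M)"
    by (rule integral_mono) (use ia ib bd in auto)
  also have "\<dots> = e" by (simp add: prob_space)
  finally show ?thesis .
qed



context sys begin

lemma core:
  fixes g0 f :: "real \<times> real \<Rightarrow> real" and fb :: "real \<Rightarrow> real"
    and L l S C lam c K :: real and k m :: nat
  assumes H1: "\<forall>g f n. integrable mI g \<longrightarrow> is_BV f \<longrightarrow>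
              \<bar>(\<integral>x. g ((T ^^ n) x) * f x \<partial>mI)
                 - (\<integral>x. g x \<partial>(distr \<mu> (restrict_space borel Iv) fst)) * (\<integral>x. f x \<partial>mI)\<bar>
              \<le> C * (\<integral>x. \<bar>g x\<bar> \<partial>mI) * BVnorm f * exp (- lam * real n)"
    and C: "0 \<le> C"
    and c: "0 \<le> c" "\<forall>x\<in>Iv. \<forall>y1\<in>Iv. \<forall>y2\<in>Iv. \<bar>G x y1 - G x y2\<bar> \<le> c * \<bar>y1 - y2\<bar>"
    and g0: "is_lip_with L g0" "\<forall>p\<in>Sq. \<bar>g0 p\<bar> \<le> L" "0 \<le> L"
    and f: "is_lip_with l f" "\<forall>p\<in>Sq. 0 \<le> f p" "\<forall>p\<in>Sq. \<bar>f p\<bar> \<le> S"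
    and fb: "is_BV fb" "totvar fb \<le> K * l" "integrable mI fb"
      "\<forall>A \<in> sets (restrict_space borel Iv).
          (\<integral>p. indicator (fst -` A) p * f p \<partial>\<mu>) = (\<integral>x. indicator A x * fb x \<partial>mI)"
  shows "\<bar>(\<integral>p. g0 ((F ^^ (k + m)) p) * f p \<partial>\<mu>) - (\<integral>p. f p \<partial>\<mu>) * (\<integral>p. g0 p \<partial>\<mu>)\<bar>
           \<le> 2 * L * c^k * S + C * L * (S + 2 * (K * l)) * exp (- lam * real m)"
proof -
  interpret prob_space \<mu> by (rule mu_prob)
  interpret mI: prob_space mI by (rule prob_mI)
  have fm: "f \<in> borel_measurable \<mu>" using lip_meas[OF f(1)] unfolding meas_mu_src .
  have g0m: "g0 \<in> borel_measurable \<mu>" using lip_meas[OF g0(1)] unfolding meas_mu_src .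
  have "\<bar>f (0,0)\<bar> \<le> S" using f(3) Iv_0 by (simp add: Sq_def)
  hence S0: "0 \<le> S" by linarith
  define h where "h x = g0 ((F^^k) (x, 0))" for x
  have hm: "h \<in> borel_measurable (restrict_space borel Iv)"
    unfolding h_def by (rule measurable_compose[OF measurable_compose[OF pair0_meas Fk_meas] g0m])
  have hb: "\<bar>h x\<bar> \<le> L" if "x \<in> Iv" for x
    using g0(2) Fk_Sq[of "(x,0)" k] that Iv_0 by (auto simp: h_def Sq_def)
  have approx: "\<bar>g0 ((F^^k) p) - h (fst p)\<bar> \<le> L * c^k" if p: "p \<in> Sq" for p
  proof -
    obtain x y where xy: "p = (x,y)" by fastforce
    have s: "(x,0) \<in> Sq" "(x,y) \<in> Sq" using p xy Iv_0 by (auto simp: Sq_def)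
    have e1: "fst ((F^^k) (x,y)) = fst ((F^^k) (x,0))" using Fk_fst[OF s(1)] Fk_fst[OF s(2)] by simp
    have e2: "\<bar>snd ((F^^k) (x,y)) - snd ((F^^k) (x,0))\<bar> \<le> c^k * \<bar>y - 0\<bar>"
      using Fk_contr[OF c s(2) s(1)] by simp
    have "\<bar>y\<bar> \<le> 1" using s by (auto simp: Sq_def Iv_def)
    hence "c^k * \<bar>y - 0\<bar> \<le> c^k" using c(1) by (simp add: mult_left_le)
    hence d: "dsup ((F^^k) (x,y)) ((F^^k) (x,0)) \<le> c^k" using e1 e2 by (simp add: dsup_def)
    have "\<bar>g0 ((F^^k) (x,y)) - g0 ((F^^k) (x,0))\<bar> \<le> L * dsup ((F^^k) (x,y)) ((F^^k) (x,0))"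
      using g0(1) Fk_Sq[OF s(1)] Fk_Sq[OF s(2)] by (auto simp: is_lip_with_def)
    also have "\<dots> \<le> L * c^k" using d g0(3) by (simp add: mult_left_mono)
    finally show ?thesis by (simp add: xy h_def)
  qed
  define H where "H x = h ((T^^m) x)" for x
  have Hm: "H \<in> borel_measurable (restrict_space borel Iv)"
  proof -
    have "(\<lambda>x. h (fst ((F^^m) (x,0)))) \<in> borel_measurable (restrict_space borel Iv)"
      by (rule measurable_compose[OF measurable_compose[OF measurable_compose[OF pair0_meas Fk_meas] fst_meas] hm])
    moreover have "\<And>x. x \<in> space (restrict_space borel Iv) \<Longrightarrow> h (fst ((F^^m) (x,0))) = H x"
    proof -
      fix x assume "x \<in> space (restrict_space borel Iv)"
      hence "(x,0) \<in> Sq" using Iv_0 by (simp add: space_IB Sq_def)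
      thus "h (fst ((F^^m) (x,0))) = H x" using Fk_fst[of "(x,0)" m] by (simp add: H_def)
    qed
    ultimately show ?thesis using measurable_cong[of "restrict_space borel Iv" "\<lambda>x. h (fst ((F^^m) (x,0)))" H] by simp
  qed
  have key: "\<bar>g0 ((F^^(k+m)) p) - H (fst p)\<bar> \<le> L * c^k" if p: "p \<in> Sq" for p
  proof -
    have "(F^^(k+m)) p = (F^^k) ((F^^m) p)" by (simp add: funpow_add)
    moreover have "H (fst p) = h (fst ((F^^m) p))" using Fk_fst[OF p] by (simp add: H_def)
    ultimately show ?thesis using approx[OF Fk_Sq[OF p]] by simp
  qed
  have fint: "integrable \<mu> f"
    by (rule integrable_const_bound[where B=S]) (use f(3) fm space_mu in auto)
  have g0int: "integrable \<mu> g0"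
    by (rule integrable_const_bound[where B=L]) (use g0(2) g0m space_mu in auto)
  have Am: "(\<lambda>p. g0 ((F^^(k+m)) p) * f p) \<in> borel_measurable \<mu>"
    by (rule borel_measurable_times[OF measurable_compose[OF Fk_meas g0m] fm])
  have Aint: "integrable \<mu> (\<lambda>p. g0 ((F^^(k+m)) p) * f p)"
  proof (rule integrable_const_bound[where B="L*S"])
    show "AE x in \<mu>. norm (g0 ((F^^(k+m)) x) * f x) \<le> L * S"
    proof (rule AE_I2)
      fix x assume "x \<in> space \<mu>"
      hence x: "x \<in> Sq" by (simp add: space_mu)
      show "norm (g0 ((F^^(k+m)) x) * f x) \<le> L * S"
        unfolding real_norm_def abs_mult
        by (rule mult_mono) (use g0 Fk_Sq[OF x] f(3) x in auto)
    qed
  qed (rule Am)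
  have Bm: "(\<lambda>p. H (fst p) * f p) \<in> borel_measurable \<mu>"
    by (rule borel_measurable_times[OF measurable_compose[OF fst_meas Hm] fm])
  have Hb: "\<bar>H x\<bar> \<le> L" if "x \<in> Iv" for x using hb T_Iv[OF that] by (simp add: H_def)
  have Bint: "integrable \<mu> (\<lambda>p. H (fst p) * f p)"
  proof (rule integrable_const_bound[where B="L*S"])
    show "AE x in \<mu>. norm (H (fst x) * f x) \<le> L * S"
    proof (rule AE_I2)
      fix x assume "x \<in> space \<mu>"
      hence x: "x \<in> Sq" by (simp add: space_mu)
      hence "fst x \<in> Iv" by (auto simp: Sq_def)
      show "norm (H (fst x) * f x) \<le> L * S"
        unfolding real_norm_def abs_mult
        by (rule mult_mono) (use Hb[OF \<open>fst x \<in> Iv\<close>] g0(3) f(3) x in auto)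
    qed
  qed (rule Bm)
  have s1: "\<bar>(\<integral>p. g0 ((F^^(k+m)) p) * f p \<partial>\<mu>) - (\<integral>p. H (fst p) * f p \<partial>\<mu>)\<bar> \<le> L * c^k * S"
  proof (rule int_diff_bound[OF mu_prob Aint Bint])
    fix p assume "p \<in> space \<mu>"
    hence p: "p \<in> Sq" by (simp add: space_mu)
    have "\<bar>g0 ((F^^(k+m)) p) * f p - H (fst p) * f p\<bar> = \<bar>g0 ((F^^(k+m)) p) - H (fst p)\<bar> * f p"
      using f(2) p by (simp add: left_diff_distrib[symmetric] abs_mult)
    also have "\<dots> \<le> (L * c^k) * S" by (rule mult_mono) (use key[OF p] f(2,3) p g0(3) c(1) in auto)
    finally show "\<bar>g0 ((F^^(k+m)) p) * f p - H (fst p) * f p\<bar> \<le> L * c^k * S" .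
  qed
  have s2: "(\<integral>p. H (fst p) * f p \<partial>\<mu>) = (\<integral>x. H x * fb x \<partial>mI)"
    by (rule push[OF fm f(2) f(3) fb(3) fb(4) Hm])
  have him: "h \<in> borel_measurable mI" using hm unfolding meas_mI .
  have hint: "integrable mI h"
    by (rule mI.integrable_const_bound[where B=L]) (use hb him space_mI in auto)
  have H1i: "\<bar>(\<integral>x. h ((T ^^ m) x) * fb x \<partial>mI)
                 - (\<integral>x. h x \<partial>(distr \<mu> (restrict_space borel Iv) fst)) * (\<integral>x. fb x \<partial>mI)\<bar>
              \<le> C * (\<integral>x. \<bar>h x\<bar> \<partial>mI) * BVnorm fb * exp (- lam * real m)"
    by (rule H1[rule_format, OF hint fb(1)])
  have habs: "(\<integral>x. \<bar>h x\<bar> \<partial>mI) \<le> L"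
    using int_diff_bound[OF prob_mI integrable_abs[OF hint] integrable_zero, of L] hb
    by (simp add: space_mI)
  have habs0: "0 \<le> (\<integral>x. \<bar>h x\<bar> \<partial>mI)" by simp
  have fbint: "(\<integral>x. fb x \<partial>mI) = (\<integral>p. f p \<partial>\<mu>)"
  proof -
    have Ivs: "Iv \<in> sets (restrict_space borel Iv)" using sets.top[of "restrict_space borel Iv"] by (simp add: space_IB)
    have "(\<integral>p. f p \<partial>\<mu>) = (\<integral>p. indicator (fst -` Iv) p * f p \<partial>\<mu>)"
      by (rule Bochner_Integration.integral_cong) (auto simp: space_mu Sq_def indicator_def)
    also have "\<dots> = (\<integral>x. indicator Iv x * fb x \<partial>mI)" by (rule fb(4)[rule_format, OF Ivs])
    also have "\<dots> = (\<integral>x. fb x \<partial>mI)"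
      by (rule Bochner_Integration.integral_cong) (auto simp: space_mI indicator_def)
    finally show ?thesis by simp
  qed
  have If0: "0 \<le> (\<integral>p. f p \<partial>\<mu>)" using f(2) space_mu by (intro integral_nonneg_AE AE_I2) auto
  have IfS: "(\<integral>p. f p \<partial>\<mu>) \<le> S"
    using int_diff_bound[OF mu_prob fint integrable_zero, of S] f(3) by (simp add: space_mu)
  have tv0: "0 \<le> totvar fb" by (rule totvar_props(1)[OF fb(1)])
  have BV: "BVnorm fb \<le> S + 2 * (K * l)"
    using BVnorm_bound[OF fb(1) fb(3)] fbint If0 IfS fb(2) by simp
  have Kl0: "0 \<le> S + 2 * (K * l)" using tv0 fb(2) S0 by simp
  have "(\<integral>x. \<bar>h x\<bar> \<partial>mI) * BVnorm fb \<le> (\<integral>x. \<bar>h x\<bar> \<partial>mI) * (S + 2 * (K * l))"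
    using BV habs0 by (rule mult_left_mono)
  also have "\<dots> \<le> L * (S + 2 * (K * l))" using habs Kl0 by (rule mult_right_mono)
  finally have hb2: "(\<integral>x. \<bar>h x\<bar> \<partial>mI) * BVnorm fb \<le> L * (S + 2 * (K * l))" .
  have s3: "\<bar>(\<integral>x. H x * fb x \<partial>mI) - (\<integral>x. h x \<partial>(distr \<mu> (restrict_space borel Iv) fst)) * (\<integral>p. f p \<partial>\<mu>)\<bar>
             \<le> C * L * (S + 2 * (K * l)) * exp (- lam * real m)"
  proof -
    have "C * (\<integral>x. \<bar>h x\<bar> \<partial>mI) * BVnorm fb * exp (- lam * real m) \<le> C * (L * (S + 2 * (K * l))) * exp (- lam * real m)"
      using hb2 C by (simp add: mult.assoc mult_left_mono)
    thus ?thesis using H1i fbint by (simp add: H_def mult.assoc)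
  qed
  have hd: "(\<integral>x. h x \<partial>(distr \<mu> (restrict_space borel Iv) fst)) = (\<integral>p. h (fst p) \<partial>\<mu>)"
    by (rule integral_distr[OF fst_meas hm])
  have gk: "(\<integral>p. g0 p \<partial>\<mu>) = (\<integral>p. g0 ((F^^k) p) \<partial>\<mu>)"
    using integral_distr[OF Fk_meas g0m, of k] Fk_inv[of k] by simp
  have hfint: "integrable \<mu> (\<lambda>p. h (fst p))"
    by (rule integrable_const_bound[where B=L]) (use hb measurable_compose[OF fst_meas hm] space_mu in \<open>auto simp: Sq_def\<close>)
  have gkint: "integrable \<mu> (\<lambda>p. g0 ((F^^k) p))"
    by (rule integrable_const_bound[where B=L]) (use g0(2) Fk_Sq measurable_compose[OF Fk_meas g0m] space_mu in auto)
  have s4: "\<bar>(\<integral>p. h (fst p) \<partial>\<mu>) - (\<integral>p. g0 p \<partial>\<mu>)\<bar> \<le> L * c^k"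
    unfolding gk using int_diff_bound[OF mu_prob hfint gkint, of "L * c^k"] approx
    by (simp add: space_mu abs_minus_commute)
  define If where "If = (\<integral>p. f p \<partial>\<mu>)"
  define Ih where "Ih = (\<integral>p. h (fst p) \<partial>\<mu>)"
  define Ig where "Ig = (\<integral>p. g0 p \<partial>\<mu>)"
  define IA where "IA = (\<integral>p. g0 ((F ^^ (k + m)) p) * f p \<partial>\<mu>)"
  define IB where "IB = (\<integral>x. H x * fb x \<partial>mI)"
  have a: "\<bar>IA - IB\<bar> \<le> L * c^k * S" using s1 s2 by (simp add: IA_def IB_def)
  have b: "\<bar>IB - Ih * If\<bar> \<le> C * L * (S + 2 * (K * l)) * exp (- lam * real m)"
    using s3 hd by (simp add: IB_def Ih_def If_def)
  have "\<bar>If * (Ih - Ig)\<bar> \<le> S * (L * c^k)"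
    unfolding abs_mult by (rule mult_mono) (use s4 If0 IfS in \<open>auto simp: If_def Ih_def Ig_def\<close>)
  hence cc: "\<bar>If * Ih - If * Ig\<bar> \<le> L * c^k * S" by (simp add: right_diff_distrib mult_ac)
  have "\<bar>IA - If * Ig\<bar> \<le> \<bar>IA - IB\<bar> + \<bar>IB - Ih * If\<bar> + \<bar>If * Ih - If * Ig\<bar>"
  proof -
    have e: "Ih * If = If * Ih" by simp
    show ?thesis unfolding e using abs_triangle_ineq[of "IA - IB" "IB - If * Ih"] abs_triangle_ineq[of "IA - If * Ih" "If * Ih - If * Ig"]
      by simp
  qed
  also have "\<dots> \<le> 2 * L * c ^ k * S + C * L * (S + 2 * (K * l)) * exp (- lam * real m)"
    using a b cc by simp
  finally show ?thesis by (simp add: IA_def If_def Ig_def)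
qed

end


lemma exp_bound:
  fixes c \<rho> :: real and n :: nat
  assumes c: "0 < c" "c < 1" and \<rho>: "\<rho> \<le> - ln c / 2"
  shows "c ^ (n div 2) \<le> exp (- \<rho> * real n) / c"
proof -
  have lc: "ln c < 0" using c by simp
  have k: "real n - 1 \<le> 2 * real (n div 2)" by linarith
  have "real (n div 2) * ln c \<le> ((real n - 1) / 2) * ln c"
    using k lc by (intro mult_right_mono_neg) auto
  also have "\<dots> = real n * (ln c / 2) - ln c / 2" by (simp add: field_simps)
  also have "\<dots> \<le> - \<rho> * real n - ln c"
  proof -
    have "real n * (ln c / 2) \<le> real n * (- \<rho>)" using \<rho> by (intro mult_left_mono) auto
    moreover have "real n * (- \<rho>) = - \<rho> * real n" by simp
    ultimately show ?thesis using lc by linarith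
  qed
  finally have "exp (real (n div 2) * ln c) \<le> exp (- \<rho> * real n - ln c)" by simp
  moreover have "exp (real (n div 2) * ln c) = c ^ (n div 2)" using c by (simp add: exp_of_nat_mult)
  moreover have "exp (- \<rho> * real n - ln c) = exp (- \<rho> * real n) / c" using c by (simp add: exp_diff)
  ultimately show ?thesis by simp
qed

theorem theorem4p7:
  fixes F :: "real \<times> real \<Rightarrow> real \<times> real"
    and T :: "real \<Rightarrow> real"
    and G :: "real \<Rightarrow> real \<Rightarrow> real"
    and \<mu> :: "(real \<times> real) measure"
  assumes mu_sets: "sets \<mu> = sets (restrict_space borel Sq)"
    and mu_prob: "prob_space \<mu>"
    and F_meas: "F \<in> measurable \<mu> \<mu>"
    and F_inv: "distr \<mu> \<mu> F = \<mu>"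
    and F_form: "\<forall>x\<in>Iv. \<forall>y\<in>Iv. F (x, y) = (T x, G x y)"
    and H1: "\<exists>C>0. \<exists>lam>0. \<forall>g f n. integrable mI g \<longrightarrow> is_BV f \<longrightarrow>
              \<bar>(\<integral>x. g ((T ^^ n) x) * f x \<partial>mI)
                 - (\<integral>x. g x \<partial>(distr \<mu> (restrict_space borel Iv) fst)) * (\<integral>x. f x \<partial>mI)\<bar>
              \<le> C * (\<integral>x. \<bar>g x\<bar> \<partial>mI) * BVnorm f * exp (- lam * real n)"
    and H1_fin: "\<forall>x\<in>Iv. finite {z \<in> Iv. T z = x}"
    and H2: "\<exists>lam0<1. \<forall>x\<in>Iv. \<forall>y1\<in>Iv. \<forall>y2\<in>Iv. \<bar>G x y1 - G x y2\<bar> \<le> lam0 * \<bar>y1 - y2\<bar>"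
    and H3: "\<exists>K. \<forall>l f. is_lip_with l f \<longrightarrow>
              (\<exists>fb. is_BV fb \<and> totvar fb \<le> K * l \<and> integrable mI fb \<and>
                 (\<forall>A \<in> sets (restrict_space borel Iv).
                    (\<integral>p. indicator (fst -` A) p * f p \<partial>\<mu>) = (\<integral>x. indicator A x * fb x \<partial>mI)))"
  shows "\<exists>C'>0. \<exists>\<rho>>0. \<forall>g f n. is_lip g \<longrightarrow> is_lip f \<longrightarrow> (\<forall>p\<in>Sq. 0 \<le> f p) \<longrightarrow>
           \<bar>(\<integral>p. g ((F ^^ n) p) * f p \<partial>\<mu>) - (\<integral>p. f p \<partial>\<mu>) * (\<integral>p. g p \<partial>\<mu>)\<bar>
           \<le> C' * lipconst g * lipnorm f * exp (- \<rho> * real n)"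
proof -
  interpret sys F T G \<mu> by (rule sys.intro[OF mu_sets mu_prob F_meas F_inv F_form])
  interpret prob_space \<mu> by (rule mu_prob)
  obtain C lam where C: "C > 0" "lam > 0" and H1': "\<forall>g f n. integrable mI g \<longrightarrow> is_BV f \<longrightarrow>
              \<bar>(\<integral>x. g ((T ^^ n) x) * f x \<partial>mI)
                 - (\<integral>x. g x \<partial>(distr \<mu> (restrict_space borel Iv) fst)) * (\<integral>x. f x \<partial>mI)\<bar>
              \<le> C * (\<integral>x. \<bar>g x\<bar> \<partial>mI) * BVnorm f * exp (- lam * real n)"
    using H1 by (elim exE conjE) (rule that; assumption)
  obtain lam0 where l0: "lam0 < 1" and H2': "\<forall>x\<in>Iv. \<forall>y1\<in>Iv. \<forall>y2\<in>Iv. \<bar>G x y1 - G x y2\<bar> \<le> lam0 * \<bar>y1 - y2\<bar>"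
    using H2 by (elim exE conjE) (rule that; assumption)
  obtain K where H3': "\<forall>l f. is_lip_with l f \<longrightarrow>
              (\<exists>fb. is_BV fb \<and> totvar fb \<le> K * l \<and> integrable mI fb \<and>
                 (\<forall>A \<in> sets (restrict_space borel Iv).
                    (\<integral>p. indicator (fst -` A) p * f p \<partial>\<mu>) = (\<integral>x. indicator A x * fb x \<partial>mI)))"
    using H3 by (elim exE conjE) (rule that; assumption)
  define c where "c = max lam0 (1/2)"
  have c: "0 < c" "c < 1" using l0 by (auto simp: c_def)
  have cG: "\<forall>x\<in>Iv. \<forall>y1\<in>Iv. \<forall>y2\<in>Iv. \<bar>G x y1 - G x y2\<bar> \<le> c * \<bar>y1 - y2\<bar>"
  proof (intro ballI)
    fix x y1 y2 assume "x \<in> Iv" "y1 \<in> Iv" "y2 \<in> Iv"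
    hence "\<bar>G x y1 - G x y2\<bar> \<le> lam0 * \<bar>y1 - y2\<bar>" by (intro H2'[rule_format])
    also have "\<dots> \<le> c * \<bar>y1 - y2\<bar>" by (rule mult_right_mono) (auto simp: c_def)
    finally show "\<bar>G x y1 - G x y2\<bar> \<le> c * \<bar>y1 - y2\<bar>" .
  qed
  define K' where "K' = max K 0"
  define \<rho> where "\<rho> = min (lam / 2) (- ln c / 2)"
  define C' where "C' = 2 / c + C * (1 + 2 * K')"
  have \<rho>: "0 < \<rho>" using c C by (auto simp: \<rho>_def)
  have K': "0 \<le> K'" by (simp add: K'_def)
  have C': "0 < C'" using c C K' by (auto simp: C'_def intro!: add_pos_nonneg)
  show ?thesis
  proof (rule exI[of _ C'], rule conjI[OF C'], rule exI[of _ \<rho>], rule conjI[OF \<rho>], intro allI impI)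
    fix g f :: "real \<times> real \<Rightarrow> real" and n :: nat
    assume g: "is_lip g" and fl: "is_lip f" and fnn: "\<forall>p\<in>Sq. 0 \<le> f p"
    define L where "L = lipconst g"
    define l where "l = lipconst f"
    define S where "S = (SUP p\<in>Sq. \<bar>f p\<bar>)"
    have L: "0 \<le> L" "is_lip_with L g" using lipconst_props[OF g] by (auto simp: L_def)
    have l: "0 \<le> l" "is_lip_with l f" using lipconst_props[OF fl] by (auto simp: l_def)
    have S: "\<forall>p\<in>Sq. \<bar>f p\<bar> \<le> S" "0 \<le> S" using lip_bounded[OF l(2)] by (auto simp: S_def)
    define g0 where "g0 p = g p - g (0,0)" for p
    have z: "(0::real,0::real) \<in> Sq" by (simp add: Sq_def Iv_def)
    have g0l: "is_lip_with L g0" using L(2) by (simp add: is_lip_with_def g0_def)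
    have g0b: "\<forall>p\<in>Sq. \<bar>g0 p\<bar> \<le> L"
    proof
      fix p assume p: "p \<in> Sq"
      have "\<bar>g0 p\<bar> \<le> L * dsup p (0,0)" using L(2) p z by (auto simp: is_lip_with_def g0_def)
      also have "\<dots> \<le> L * 1" using dsup_le1[OF p z] L(1) by (intro mult_left_mono)
      finally show "\<bar>g0 p\<bar> \<le> L" by simp
    qed
    obtain fb where fb: "is_BV fb" "totvar fb \<le> K * l" "integrable mI fb"
      "\<forall>A \<in> sets (restrict_space borel Iv).
          (\<integral>p. indicator (fst -` A) p * f p \<partial>\<mu>) = (\<integral>x. indicator A x * fb x \<partial>mI)"
      using H3'[rule_format, OF l(2)] by (elim exE conjE) (rule that; assumption)
    define k where "k = n div 2"
    define m where "m = n - k"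
    have km: "k + m = n" by (simp add: k_def m_def)
    have core': "\<bar>(\<integral>p. g0 ((F ^^ (k + m)) p) * f p \<partial>\<mu>) - (\<integral>p. f p \<partial>\<mu>) * (\<integral>p. g0 p \<partial>\<mu>)\<bar>
           \<le> 2 * L * c^k * S + C * L * (S + 2 * (K * l)) * exp (- lam * real m)"
      by (rule core[OF H1' _ _ cG g0l g0b L(1) l(2) fnn S(1) fb]) (use C c in auto)
    have fm: "f \<in> borel_measurable \<mu>" using lip_meas[OF l(2)] unfolding meas_mu_src .
    have gm: "g \<in> borel_measurable \<mu>" using lip_meas[OF L(2)] unfolding meas_mu_src .
    have g0m: "g0 \<in> borel_measurable \<mu>" using lip_meas[OF g0l] unfolding meas_mu_src .
    have fint: "integrable \<mu> f"
      by (rule integrable_const_bound[where B=S]) (use S fm space_mu in auto)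
    have g0int: "integrable \<mu> g0"
      by (rule integrable_const_bound[where B=L]) (use g0b g0m space_mu in auto)
    have Aint: "integrable \<mu> (\<lambda>p. g0 ((F^^n) p) * f p)"
    proof (rule integrable_const_bound[where B="L*S"])
      show "AE x in \<mu>. norm (g0 ((F^^n) x) * f x) \<le> L * S"
      proof (rule AE_I2)
        fix x assume "x \<in> space \<mu>"
        hence x: "x \<in> Sq" by (simp add: space_mu)
        show "norm (g0 ((F^^n) x) * f x) \<le> L * S"
          unfolding real_norm_def abs_mult
          by (rule mult_mono) (use g0b Fk_Sq[OF x] S x L in auto)
      qed
    qed (rule borel_measurable_times[OF measurable_compose[OF Fk_meas g0m] fm])
    have e1: "(\<integral>p. g ((F ^^ n) p) * f p \<partial>\<mu>) = (\<integral>p. g0 ((F ^^ n) p) * f p \<partial>\<mu>) + g (0,0) * (\<integral>p. f p \<partial>\<mu>)"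
    proof -
      have "(\<integral>p. g ((F ^^ n) p) * f p \<partial>\<mu>) = (\<integral>p. g0 ((F ^^ n) p) * f p + g (0,0) * f p \<partial>\<mu>)"
        by (simp add: g0_def algebra_simps)
      also have "\<dots> = (\<integral>p. g0 ((F ^^ n) p) * f p \<partial>\<mu>) + (\<integral>p. g (0,0) * f p \<partial>\<mu>)"
        by (rule Bochner_Integration.integral_add[OF Aint]) (use fint in simp)
      finally show ?thesis by simp
    qed
    have e2: "(\<integral>p. g p \<partial>\<mu>) = (\<integral>p. g0 p \<partial>\<mu>) + g (0,0)"
    proof -
      have "(\<integral>p. g p \<partial>\<mu>) = (\<integral>p. g0 p + g (0,0) \<partial>\<mu>)" by (simp add: g0_def)
      also have "\<dots> = (\<integral>p. g0 p \<partial>\<mu>) + g (0,0)"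
        using g0int by (simp add: prob_space)
      finally show ?thesis .
    qed
    have lhs: "(\<integral>p. g ((F ^^ n) p) * f p \<partial>\<mu>) - (\<integral>p. f p \<partial>\<mu>) * (\<integral>p. g p \<partial>\<mu>)
       = (\<integral>p. g0 ((F ^^ (k + m)) p) * f p \<partial>\<mu>) - (\<integral>p. f p \<partial>\<mu>) * (\<integral>p. g0 p \<partial>\<mu>)"
      unfolding e1 e2 km by (simp add: algebra_simps)
    define E where "E = exp (- \<rho> * real n)"
    have E0: "0 \<le> E" by (simp add: E_def)
    have ck: "c^k \<le> E / c" unfolding k_def E_def by (rule exp_bound[OF c]) (simp add: \<rho>_def)
    have em: "exp (- lam * real m) \<le> E"
    proof -
      have "real n \<le> 2 * real m" unfolding m_def k_def by linarith
      have r2: "\<rho> \<le> lam / 2" by (simp add: \<rho>_def)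
      have "\<rho> * real n \<le> (lam / 2) * real n" using r2 by (intro mult_right_mono) auto
      also have "\<dots> = lam * (real n / 2)" by simp
      also have "\<dots> \<le> lam * real m" using \<open>real n \<le> 2 * real m\<close> C(2) by (intro mult_left_mono) auto
      finally have "\<rho> * real n \<le> lam * real m" .
      thus ?thesis by (simp add: E_def)
    qed
    have t1: "2 * L * c^k * S \<le> (2 / c) * (L * (S + l) * E)"
    proof -
      have "2 * L * c^k * S = (2 * L * S) * c^k" by simp
      also have "\<dots> \<le> (2 * L * S) * (E / c)" using ck L(1) S(2) by (intro mult_left_mono) auto
      also have "\<dots> \<le> (2 / c) * (L * (S + l) * E)"
      proof -
        have "L * S * E \<le> L * (S + l) * E" using L(1) l(1) E0 by (intro mult_right_mono mult_left_mono) auto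
        thus ?thesis using c by (simp add: field_simps)
      qed
      finally show ?thesis .
    qed
    have t2: "C * L * (S + 2 * (K * l)) * exp (- lam * real m) \<le> C * (1 + 2 * K') * (L * (S + l) * E)"
    proof -
      have "K * l \<le> K' * l" using l(1) by (intro mult_right_mono) (auto simp: K'_def)
      moreover have "0 \<le> K' * S" using K' S(2) by simp
      moreover have "(1 + 2 * K') * (S + l) = S + l + 2 * (K' * S) + 2 * (K' * l)" by (simp add: algebra_simps)
      ultimately have a: "S + 2 * (K * l) \<le> (1 + 2 * K') * (S + l)" using l(1) by linarith
      have tv0: "0 \<le> totvar fb" by (rule totvar_props(1)[OF fb(1)])
      have b0: "0 \<le> S + 2 * (K * l)" using tv0 fb(2) S(2) by simp
      have "C * L * (S + 2 * (K * l)) * exp (- lam * real m) \<le> C * L * (S + 2 * (K * l)) * E"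
        using em C L b0 by (intro mult_left_mono) auto
      also have "\<dots> \<le> C * L * ((1 + 2 * K') * (S + l)) * E"
        using a C L E0 by (intro mult_right_mono mult_left_mono) auto
      finally show ?thesis by (simp add: mult_ac)
    qed
    have "\<bar>(\<integral>p. g ((F ^^ n) p) * f p \<partial>\<mu>) - (\<integral>p. f p \<partial>\<mu>) * (\<integral>p. g p \<partial>\<mu>)\<bar>
        \<le> (2 / c) * (L * (S + l) * E) + C * (1 + 2 * K') * (L * (S + l) * E)"
      using core' t1 t2 unfolding lhs by linarith
    also have "\<dots> = C' * L * (S + l) * E" using c by (simp add: C'_def field_simps)
    finally show "\<bar>(\<integral>p. g ((F ^^ n) p) * f p \<partial>\<mu>) - (\<integral>p. f p \<partial>\<mu>) * (\<integral>p. g p \<partial>\<mu>)\<bar>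
           \<le> C' * lipconst g * lipnorm f * exp (- \<rho> * real n)"
      by (simp add: L_def l_def S_def E_def lipnorm_def)
  qed
qed


end
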